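(* Let $G$ be a Hausdorff topological group, $Y$ a topological space with a topological partial action $\theta$ of $G$, and $X$ a nonempty compact space, with $\hat\theta$ the induced partial action on $C(X,Y)$. Then: (i) $G*Y$ is open in $G\times Y$ if and only if $G*C(X,Y)$ is open in $G\times C(X,Y)$; (ii) $\theta$ is nice if and only if $\hat\theta$ is nice.
   Context: A topological partial action of $G$ on $Y$ is a family $\{\theta_g\colon Y_{g^{-1}}\to Y_g\}_{g\in G}$ of homeomorphisms between open subsets of $Y$ with $Y_e=Y$, $\theta_e=\mathrm{id}_Y$, $\theta_{g^{-1}}=\theta_g^{-1}$ and $\theta_g\circ\theta_h$ a restriction of $\theta_{gh}$ for all $g,h$. Its domain is $G*Y=\{(g,y)\in G\times Y: y\in Y_{g^{-1}}\}$; $\theta$ is continuous if $G*Y\to Y$, $(g,y)\mapsto\theta_g(y)$, is continuous (subspace topology), and nice if it is continuous and $G*Y$ is open in $G\times Y$. $C(X,Y)$ carries the compact-open topology. The induced partial action $\hat\theta$ on $C(X,Y)$ has $C(X,Y)_g=\{f: f(X)\subset Y_g\}$ and $\hat\theta_g(f)=\theta_g\circ f$; its domain is $G*C(X,Y)=\{(g,f)\in G\times C(X,Y): f(X)\subset Y_{g^{-1}}\}$. *)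

theory Defs
  imports "HOL-Analysis.Analysis"
begin

text \<open>The group G is a type of class topological_group_add (group operation +,
 inverse uminus, neutral element 0; commutativity is NOT assumed).
 A partial action is given by domains D g (= Y_g) and maps theta g, where
 theta g is only relevant on D (- g) (= Y_{g^{-1}}).\<close>

definition partial_action ::
  "'y topology \<Rightarrow> ('g::group_add \<Rightarrow> 'y set) \<Rightarrow> ('g \<Rightarrow> 'y \<Rightarrow> 'y) \<Rightarrow> bool" where
  "partial_action TY D \<theta> \<longleftrightarrow>
     (\<forall>g. openin TY (D g)) \<and>
     (\<forall>g. homeomorphic_map (subtopology TY (D (- g))) (subtopology TY (D g)) (\<theta> g)) \<and>
     D 0 = topspace TY \<and> (\<forall>y \<in> topspace TY. \<theta> 0 y = y) \<and>
     (\<forall>g. \<forall>y \<in> D (- g). \<theta> (- g) (\<theta> g y) = y) \<and>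
     (\<forall>g. \<forall>y \<in> D g. \<theta> g (\<theta> (- g) y) = y) \<and>
     (\<forall>g h. \<forall>y. y \<in> D (- h) \<and> \<theta> h y \<in> D (- g) \<longrightarrow>
         y \<in> D (- (g + h)) \<and> \<theta> g (\<theta> h y) = \<theta> (g + h) y)"

definition pa_domain :: "('g::group_add \<Rightarrow> 'y set) \<Rightarrow> ('g \<times> 'y) set" where
  "pa_domain D = {(g, y). y \<in> D (- g)}"

definition pa_continuous ::
  "'y topology \<Rightarrow> ('g::{group_add,topological_space} \<Rightarrow> 'y set) \<Rightarrow> ('g \<Rightarrow> 'y \<Rightarrow> 'y) \<Rightarrow> bool" where
  "pa_continuous TY D \<theta> \<longleftrightarrow>
     continuous_map (subtopology (prod_topology euclidean TY) (pa_domain D)) TY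
       (\<lambda>(g, y). \<theta> g y)"

definition pa_nice ::
  "'y topology \<Rightarrow> ('g::{group_add,topological_space} \<Rightarrow> 'y set) \<Rightarrow> ('g \<Rightarrow> 'y \<Rightarrow> 'y) \<Rightarrow> bool" where
  "pa_nice TY D \<theta> \<longleftrightarrow>
     pa_continuous TY D \<theta> \<and> openin (prod_topology euclidean TY) (pa_domain D)"

text \<open>C(X,Y): continuous maps, represented extensionally (undefined off topspace X).\<close>
definition cmaps :: "'x topology \<Rightarrow> 'y topology \<Rightarrow> ('x \<Rightarrow> 'y) set" where
  "cmaps TX TY = {f. continuous_map TX TY f \<and> f \<in> extensional (topspace TX)}"

text \<open>Compact-open topology: generated by the subbasis of sets {f. f(K) \<subseteq> U},
 K compact in X, U open in Y (K = {} gives the whole space).\<close>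
definition compact_open :: "'x topology \<Rightarrow> 'y topology \<Rightarrow> ('x \<Rightarrow> 'y) topology" where
  "compact_open TX TY = topology_generated_by
     {{f \<in> cmaps TX TY. f ` K \<subseteq> U} | K U. compactin TX K \<and> openin TY U}"

definition induced_dom ::
  "'x topology \<Rightarrow> 'y topology \<Rightarrow> ('g \<Rightarrow> 'y set) \<Rightarrow> 'g \<Rightarrow> ('x \<Rightarrow> 'y) set" where
  "induced_dom TX TY D g = {f \<in> cmaps TX TY. f ` topspace TX \<subseteq> D g}"

definition induced_act ::
  "'x topology \<Rightarrow> ('g \<Rightarrow> 'y \<Rightarrow> 'y) \<Rightarrow> 'g \<Rightarrow> ('x \<Rightarrow> 'y) \<Rightarrow> ('x \<Rightarrow> 'y)" where
  "induced_act TX \<theta> g f = restrict (\<theta> g \<circ> f) (topspace TX)"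

end

theory Submission
  imports Defs
begin

definition coS :: "'x topology \<Rightarrow> 'y topology \<Rightarrow> ('x \<Rightarrow> 'y) set set" where
  "coS TX TY = {{f \<in> cmaps TX TY. f ` K \<subseteq> U} | K U. compactin TX K \<and> openin TY U}"

lemma coS_Union: "\<Union>(coS TX TY) = cmaps TX TY"
proof (rule subset_antisym)
  show "\<Union>(coS TX TY) \<subseteq> cmaps TX TY" unfolding coS_def by auto
  have "{f \<in> cmaps TX TY. f ` {} \<subseteq> {}} \<in> coS TX TY"
    unfolding coS_def
    by (rule CollectI, rule exI[of _ "{}"], rule exI[of _ "{}"]) simp
  moreover have "{f \<in> cmaps TX TY. f ` {} \<subseteq> {}} = cmaps TX TY" by simp
  ultimately show "cmaps TX TY \<subseteq> \<Union>(coS TX TY)" by (metis Union_upper)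
qed

lemma co_topspace: "topspace (compact_open TX TY) = cmaps TX TY"
  unfolding compact_open_def coS_def[symmetric] topology_generated_by_topspace coS_Union ..

lemma co_open:
  assumes "compactin TX K" "openin TY U"
  shows "openin (compact_open TX TY) {f \<in> cmaps TX TY. f ` K \<subseteq> U}"
proof -
  have "{f \<in> cmaps TX TY. f ` K \<subseteq> U} \<in> coS TX TY"
    unfolding coS_def using assms by blast
  then show ?thesis unfolding compact_open_def coS_def[symmetric]
    by (rule topology_generated_by_Basis)
qed

lemma co_contI:
  assumes "\<And>z. z \<in> topspace T \<Longrightarrow> h z \<in> cmaps TX TY"
    and "\<And>K U. compactin TX K \<Longrightarrow> openin TY U \<Longrightarrow>
          openin T {z \<in> topspace T. h z ` K \<subseteq> U}"
  shows "continuous_map T (compact_open TX TY) h"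
  unfolding compact_open_def coS_def[symmetric]
proof (rule continuous_on_generated_topo)
  fix V assume "V \<in> coS TX TY"
  then obtain K U where V: "V = {f \<in> cmaps TX TY. f ` K \<subseteq> U}" "compactin TX K" "openin TY U"
    unfolding coS_def by blast
  have "h -` V \<inter> topspace T = {z \<in> topspace T. h z ` K \<subseteq> U}" using V(1) assms(1) by auto
  then show "openin T (h -` V \<inter> topspace T)" using assms(2)[OF V(2,3)] by (simp only:)
next
  show "h ` topspace T \<subseteq> \<Union> (coS TX TY)"
    unfolding coS_Union using assms(1) by blast
qed

definition cst :: "'x topology \<Rightarrow> 'y \<Rightarrow> 'x \<Rightarrow> 'y" where
  "cst TX y = restrict (\<lambda>_. y) (topspace TX)"

lemma cst_cmaps:
  assumes "y \<in> topspace TY" shows "cst TX y \<in> cmaps TX TY"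
proof -
  have "continuous_map TX TY (\<lambda>_. y)" using assms by simp
  then have "continuous_map TX TY (cst TX y)"
    by (rule continuous_map_eq) (simp add: cst_def)
  then show ?thesis unfolding cmaps_def cst_def by simp
qed

lemma cst_cont: "continuous_map TY (compact_open TX TY) (cst TX)"
proof (rule co_contI)
  fix K U assume K: "compactin TX K" and U: "openin TY U"
  show "openin TY {z \<in> topspace TY. cst TX z ` K \<subseteq> U}"
  proof (cases "K = {}")
    case True then show ?thesis by simp
  next
    case False
    have "K \<subseteq> topspace TX" using K compactin_subset_topspace by blast
    then have "{z \<in> topspace TY. cst TX z ` K \<subseteq> U} = U"
      using False openin_subset[OF U] by (auto simp: cst_def)
    then show ?thesis using U by simp
  qed
qed (rule cst_cmaps)

lemma ev_cont:
  assumes "x0 \<in> topspace TX"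
  shows "continuous_map (compact_open TX TY) TY (\<lambda>f. f x0)"
  unfolding continuous_map_def
proof (intro conjI allI impI)
  show "(\<lambda>f. f x0) \<in> topspace (compact_open TX TY) \<rightarrow> topspace TY"
  proof
    fix f assume "f \<in> topspace (compact_open TX TY)"
    then have "continuous_map TX TY f" by (simp add: co_topspace cmaps_def)
    then show "f x0 \<in> topspace TY" using assms by (rule continuous_map_image_subset_topspace[THEN subsetD, OF _ imageI])
  qed
next
  fix U assume U: "openin TY U"
  have eq: "{f \<in> topspace (compact_open TX TY). f x0 \<in> U} = {f \<in> cmaps TX TY. f ` {x0} \<subseteq> U}"
    by (auto simp: co_topspace)
  have "compactin TX {x0}" using assms by (simp add: compactin_sing)
  then have "openin (compact_open TX TY) {f \<in> cmaps TX TY. f ` {x0} \<subseteq> U}" by (rule co_open[OF _ U])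
  then show "openin (compact_open TX TY) {f \<in> topspace (compact_open TX TY). f x0 \<in> U}"
    by (simp only: eq)
qed


lemma pa_open: "partial_action TY D \<theta> \<Longrightarrow> openin TY (D g)"
  unfolding partial_action_def by blast

lemma pa_sub: "partial_action TY D \<theta> \<Longrightarrow> D g \<subseteq> topspace TY"
  using pa_open openin_subset by metis

lemma pa_homeo: "partial_action TY D \<theta> \<Longrightarrow>
   homeomorphic_map (subtopology TY (D (- g))) (subtopology TY (D g)) (\<theta> g)"
  unfolding partial_action_def by blast

lemma pa_cont: "partial_action TY D \<theta> \<Longrightarrow>
   continuous_map (subtopology TY (D (- g))) TY (\<theta> g)"
  using pa_homeo[THEN homeomorphic_imp_continuous_map] continuous_map_in_subtopology by blast

lemma pa_maps:
  assumes "partial_action TY D \<theta>" "y \<in> D (- g)" shows "\<theta> g y \<in> D g"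
proof -
  have "\<theta> g ` topspace (subtopology TY (D (- g))) = topspace (subtopology TY (D g))"
    using pa_homeo[OF assms(1)] by (rule homeomorphic_imp_surjective_map)
  moreover have "y \<in> topspace (subtopology TY (D (- g)))"
    using assms pa_sub[OF assms(1)] by auto
  ultimately show ?thesis by auto
qed

lemma act_cmaps:
  assumes PA: "partial_action TY D \<theta>" and f: "f \<in> cmaps TX TY" "f ` topspace TX \<subseteq> D (- g)"
  shows "induced_act TX \<theta> g f \<in> cmaps TX TY"
proof -
  have "continuous_map TX TY f" using f by (simp add: cmaps_def)
  then have "continuous_map TX (subtopology TY (D (- g))) f"
    using f(2) by (intro continuous_map_into_subtopology) auto
  then have "continuous_map TX TY (\<theta> g \<circ> f)"
    using pa_cont[OF PA] by (rule continuous_map_compose)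
  then have "continuous_map TX TY (induced_act TX \<theta> g f)"
    by (rule continuous_map_eq) (simp add: induced_act_def)
  then show ?thesis unfolding cmaps_def induced_act_def by simp
qed

lemma dom_open_fwd:
  assumes PA: "partial_action TY D \<theta>" and cX: "compact_space TX"
    and op: "openin (prod_topology euclidean TY) (pa_domain D)"
  shows "openin (prod_topology euclidean (compact_open TX TY)) (pa_domain (induced_dom TX TY D))"
  unfolding openin_prod_topology_alt
proof (intro allI impI)
  fix g f assume "(g, f) \<in> pa_domain (induced_dom TX TY D)"
  then have f: "f \<in> cmaps TX TY" "f ` topspace TX \<subseteq> D (- g)"
    by (auto simp: pa_domain_def induced_dom_def)
  have "compactin TY (f ` topspace TX)"
    using cX f(1) by (intro image_compactin) (auto simp: compact_space_def cmaps_def)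
  moreover have "{g} \<times> f ` topspace TX \<subseteq> pa_domain D" using f(2) by (auto simp: pa_domain_def)
  ultimately obtain U V where UV: "openin euclidean U" "openin TY V" "g \<in> U"
      "f ` topspace TX \<subseteq> V" "U \<times> V \<subseteq> pa_domain D"
    using tube_lemma_right[OF op, of "f ` topspace TX" g] by auto
  show "\<exists>U V. openin euclidean U \<and> openin (compact_open TX TY) V \<and> g \<in> U \<and> f \<in> V \<and>
          U \<times> V \<subseteq> pa_domain (induced_dom TX TY D)"
  proof (intro exI conjI)
    show "openin (compact_open TX TY) {f' \<in> cmaps TX TY. f' ` topspace TX \<subseteq> V}"
      using cX UV(2) by (intro co_open) (auto simp: compact_space_def)
    show "U \<times> {f' \<in> cmaps TX TY. f' ` topspace TX \<subseteq> V} \<subseteq> pa_domain (induced_dom TX TY D)"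
    proof
      fix z assume "z \<in> U \<times> {f' \<in> cmaps TX TY. f' ` topspace TX \<subseteq> V}"
      then obtain h f' where z: "z = (h, f')" "h \<in> U" "f' \<in> cmaps TX TY" "f' ` topspace TX \<subseteq> V"
        by blast
      have "f' ` topspace TX \<subseteq> D (- h)"
      proof
        fix v assume "v \<in> f' ` topspace TX"
        then have "(h, v) \<in> U \<times> V" using z by blast
        then show "v \<in> D (- h)" using UV(5) by (auto simp: pa_domain_def)
      qed
      then show "z \<in> pa_domain (induced_dom TX TY D)"
        using z by (simp add: pa_domain_def induced_dom_def)
    qed
  qed (use UV f in auto)
qed

lemma dom_open_bwd:
  assumes PA: "partial_action TY D \<theta>" and ne: "topspace TX \<noteq> {}"
    and op: "openin (prod_topology euclidean (compact_open TX TY)) (pa_domain (induced_dom TX TY D))"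
  shows "openin (prod_topology euclidean TY) (pa_domain D)"
  unfolding openin_prod_topology_alt
proof (intro allI impI)
  fix g y assume "(g, y) \<in> pa_domain D"
  then have y: "y \<in> D (- g)" by (simp add: pa_domain_def)
  then have yT: "y \<in> topspace TY" using pa_sub[OF PA] by blast
  have "cst TX y ` topspace TX \<subseteq> D (- g)" using y by (auto simp: cst_def)
  then have mem: "(g, cst TX y) \<in> pa_domain (induced_dom TX TY D)"
    using cst_cmaps[OF yT] by (simp add: pa_domain_def induced_dom_def)
  obtain U N where UN: "openin euclidean U" "openin (compact_open TX TY) N" "g \<in> U"
     "cst TX y \<in> N" "U \<times> N \<subseteq> pa_domain (induced_dom TX TY D)"
    using op[unfolded openin_prod_topology_alt, rule_format, OF mem] by (elim exE conjE)
  obtain x0 where x0: "x0 \<in> topspace TX" using ne by blast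
  show "\<exists>U V. openin euclidean U \<and> openin TY V \<and> g \<in> U \<and> y \<in> V \<and> U \<times> V \<subseteq> pa_domain D"
  proof (intro exI conjI)
    show "openin TY {z \<in> topspace TY. cst TX z \<in> N}"
      using cst_cont UN(2) by (rule openin_continuous_map_preimage)
    show "y \<in> {z \<in> topspace TY. cst TX z \<in> N}" using yT UN(4) by simp
    show "U \<times> {z \<in> topspace TY. cst TX z \<in> N} \<subseteq> pa_domain D"
    proof
      fix w assume "w \<in> U \<times> {z \<in> topspace TY. cst TX z \<in> N}"
      then obtain h z where w: "w = (h, z)" "h \<in> U" "cst TX z \<in> N" by blast
      then have "(h, cst TX z) \<in> pa_domain (induced_dom TX TY D)" using UN(5) by blast
      then have "cst TX z ` topspace TX \<subseteq> D (- h)" by (simp add: pa_domain_def induced_dom_def)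
      then have "cst TX z x0 \<in> D (- h)" using x0 by blast
      then show "w \<in> pa_domain D" using w x0 by (simp add: pa_domain_def cst_def)
    qed
  qed (use UN in auto)
qed


lemma top_dom: "topspace (subtopology (prod_topology euclidean (compact_open TX TY)) (pa_domain (induced_dom TX TY D)))
   = pa_domain (induced_dom TX TY D)"
  by (auto simp: co_topspace pa_domain_def induced_dom_def)

lemma top_domY: "partial_action TY D \<theta> \<Longrightarrow>
   topspace (subtopology (prod_topology euclidean TY) (pa_domain D)) = pa_domain D"
  using pa_sub[of TY D \<theta>] by (auto simp: pa_domain_def)

lemma cont_fwd:
  assumes PA: "partial_action TY D \<theta>" and ct: "pa_continuous TY D \<theta>"
  shows "pa_continuous (compact_open TX TY) (induced_dom TX TY D) (induced_act TX \<theta>)"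
  unfolding pa_continuous_def
proof (rule co_contI)
  fix z assume "z \<in> topspace (subtopology (prod_topology euclidean (compact_open TX TY)) (pa_domain (induced_dom TX TY D)))"
  then obtain g f where z: "z = (g, f)" "f \<in> cmaps TX TY" "f ` topspace TX \<subseteq> D (- g)"
    unfolding top_dom by (auto simp: pa_domain_def induced_dom_def)
  show "(case z of (g, f) \<Rightarrow> induced_act TX \<theta> g f) \<in> cmaps TX TY"
    using act_cmaps[OF PA z(2,3)] z(1) by simp
next
  fix K U assume K: "compactin TX K" and U: "openin TY U"
  let ?T1 = "subtopology (prod_topology euclidean (compact_open TX TY)) (pa_domain (induced_dom TX TY D))"
  let ?S1 = "subtopology (prod_topology euclidean TY) (pa_domain D)"
  have KX: "K \<subseteq> topspace TX" using K compactin_subset_topspace by blast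
  have "openin ?S1 {z \<in> topspace ?S1. (case z of (g, y) \<Rightarrow> \<theta> g y) \<in> U}"
    using ct U unfolding pa_continuous_def by (rule openin_continuous_map_preimage)
  then obtain O' where O': "openin (prod_topology euclidean TY) O'"
    "{z \<in> topspace ?S1. (case z of (g, y) \<Rightarrow> \<theta> g y) \<in> U} = O' \<inter> pa_domain D"
    unfolding openin_subtopology by blast
  show "openin ?T1 {z \<in> topspace ?T1. (case z of (g, f) \<Rightarrow> induced_act TX \<theta> g f) ` K \<subseteq> U}"
  proof (subst openin_subopen, rule ballI)
    fix z assume zin: "z \<in> {z \<in> topspace ?T1. (case z of (g, f) \<Rightarrow> induced_act TX \<theta> g f) ` K \<subseteq> U}"
    then obtain g f where z: "z = (g, f)" "f \<in> cmaps TX TY" "f ` topspace TX \<subseteq> D (- g)"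
      "induced_act TX \<theta> g f ` K \<subseteq> U"
      unfolding top_dom by (auto simp: pa_domain_def induced_dom_def)
    have fc: "continuous_map TX TY f" using z(2) by (simp add: cmaps_def)
    have cK: "compactin TY (f ` K)" using K fc by (rule image_compactin)
    have sub: "{g} \<times> f ` K \<subseteq> O'"
    proof
      fix w assume "w \<in> {g} \<times> f ` K"
      then obtain k where w: "w = (g, f k)" "k \<in> K" by blast
      have kX: "k \<in> topspace TX" using w(2) KX by blast
      have "f k \<in> D (- g)" using z(3) kX by blast
      moreover have "\<theta> g (f k) \<in> U" using z(4) w(2) kX by (auto simp: induced_act_def)
      ultimately have "w \<in> {z \<in> topspace ?S1. (case z of (g, y) \<Rightarrow> \<theta> g y) \<in> U}"
        using w(1) pa_sub[OF PA, of "- g"] by (auto simp: top_domY[OF PA] pa_domain_def)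
      then show "w \<in> O'" using O'(2) by blast
    qed
    obtain V W where VW: "openin euclidean V" "openin TY W" "g \<in> V" "f ` K \<subseteq> W" "V \<times> W \<subseteq> O'"
      using tube_lemma_right[OF O'(1) cK _ sub] by auto
    let ?T = "pa_domain (induced_dom TX TY D) \<inter> (V \<times> {f' \<in> cmaps TX TY. f' ` K \<subseteq> W})"
    show "\<exists>T. openin ?T1 T \<and> z \<in> T \<and> T \<subseteq> {z \<in> topspace ?T1. (case z of (g, f) \<Rightarrow> induced_act TX \<theta> g f) ` K \<subseteq> U}"
    proof (intro exI conjI)
      have "openin (prod_topology euclidean (compact_open TX TY)) (V \<times> {f' \<in> cmaps TX TY. f' ` K \<subseteq> W})"
        using VW(1) co_open[OF K VW(2)] by (simp add: openin_prod_Times_iff)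
      then show "openin ?T1 ?T" by (rule openin_subtopology_Int2)
      show "z \<in> ?T" using zin z VW by (auto simp: top_dom)
      show "?T \<subseteq> {z \<in> topspace ?T1. (case z of (g, f) \<Rightarrow> induced_act TX \<theta> g f) ` K \<subseteq> U}"
      proof
        fix w assume w: "w \<in> ?T"
        then obtain h f' where hf: "w = (h, f')" "h \<in> V" "f' \<in> cmaps TX TY" "f' ` K \<subseteq> W"
          "f' ` topspace TX \<subseteq> D (- h)"
          by (auto simp: pa_domain_def induced_dom_def)
        have "induced_act TX \<theta> h f' ` K \<subseteq> U"
        proof
          fix u assume "u \<in> induced_act TX \<theta> h f' ` K"
          then obtain k where k: "k \<in> K" "u = induced_act TX \<theta> h f' k" by blast
          have kX: "k \<in> topspace TX" using k(1) KX by blast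
          have "(h, f' k) \<in> O'" using VW(5) hf(2,4) k(1) by blast
          moreover have "f' k \<in> D (- h)" using hf(5) kX by blast
          ultimately have "(h, f' k) \<in> {z \<in> topspace ?S1. (case z of (g, y) \<Rightarrow> \<theta> g y) \<in> U}"
            using O'(2) by (simp add: pa_domain_def)
          then have "\<theta> h (f' k) \<in> U" by simp
          then show "u \<in> U" using k kX by (simp add: induced_act_def)
        qed
        then show "w \<in> {z \<in> topspace ?T1. (case z of (g, f) \<Rightarrow> induced_act TX \<theta> g f) ` K \<subseteq> U}"
          using w hf(1) by (simp add: top_dom co_topspace)
      qed
    qed
  qed
qed


lemma cont_bwd:
  assumes PA: "partial_action TY D \<theta>" and ne: "topspace TX \<noteq> {}"
    and ct: "pa_continuous (compact_open TX TY) (induced_dom TX TY D) (induced_act TX \<theta>)"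
  shows "pa_continuous TY D \<theta>"
proof -
  obtain x0 where x0: "x0 \<in> topspace TX" using ne by blast
  let ?S1 = "subtopology (prod_topology euclidean TY) (pa_domain D)"
  let ?T1 = "subtopology (prod_topology euclidean (compact_open TX TY)) (pa_domain (induced_dom TX TY D))"
  have c1: "continuous_map ?S1 euclidean (\<lambda>z. fst z)"
    by (rule continuous_map_from_subtopology[OF continuous_map_fst])
  have "continuous_map ?S1 (compact_open TX TY) (cst TX \<circ> snd)"
    by (rule continuous_map_compose[OF continuous_map_from_subtopology[OF continuous_map_snd] cst_cont])
  then have c2: "continuous_map ?S1 (compact_open TX TY) (\<lambda>z. cst TX (snd z))"
    by (simp add: o_def)
  have c3: "continuous_map ?S1 (prod_topology euclidean (compact_open TX TY)) (\<lambda>z. (fst z, cst TX (snd z)))"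
    using c1 c2 by (rule continuous_map_pairedI)
  have "(\<lambda>z. (fst z, cst TX (snd z))) \<in> topspace ?S1 \<rightarrow> pa_domain (induced_dom TX TY D)"
  proof
    fix z assume "z \<in> topspace ?S1"
    then obtain h y where z: "z = (h, y)" "y \<in> D (- h)" by (auto simp: top_domY[OF PA] pa_domain_def)
    have yT: "y \<in> topspace TY" using z(2) pa_sub[OF PA] by blast
    have "cst TX y ` topspace TX \<subseteq> D (- h)" using z(2) by (auto simp: cst_def)
    then show "(fst z, cst TX (snd z)) \<in> pa_domain (induced_dom TX TY D)"
      using cst_cmaps[OF yT] z(1) by (simp add: pa_domain_def induced_dom_def)
  qed
  then have c4: "continuous_map ?S1 ?T1 (\<lambda>z. (fst z, cst TX (snd z)))"
    using c3 by (intro continuous_map_into_subtopology)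
  have c5: "continuous_map ?S1 TY ((\<lambda>f. f x0) \<circ> (\<lambda>(g, f). induced_act TX \<theta> g f) \<circ> (\<lambda>z. (fst z, cst TX (snd z))))"
    using continuous_map_compose[OF continuous_map_compose[OF c4 ct[unfolded pa_continuous_def]] ev_cont[OF x0]]
    by (simp add: o_assoc)
  show ?thesis unfolding pa_continuous_def
  proof (rule continuous_map_eq[OF c5])
    fix z assume "z \<in> topspace ?S1"
    then obtain h y where z: "z = (h, y)" by (cases z) auto
    show "((\<lambda>f. f x0) \<circ> (\<lambda>(g, f). induced_act TX \<theta> g f) \<circ> (\<lambda>z. (fst z, cst TX (snd z)))) z
          = (case z of (g, y) \<Rightarrow> \<theta> g y)"
      using z x0 by (simp add: induced_act_def cst_def)
  qed
qed

theorem proposition3p3: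
  fixes TX :: "'x topology" and TY :: "'y topology"
    and D :: "'g::{topological_group_add, t2_space} \<Rightarrow> 'y set"
    and \<theta> :: "'g \<Rightarrow> 'y \<Rightarrow> 'y"
  assumes "partial_action TY D \<theta>"
    and "compact_space TX" and "topspace TX \<noteq> {}"
  shows "(openin (prod_topology euclidean TY) (pa_domain D) \<longleftrightarrow>
          openin (prod_topology euclidean (compact_open TX TY))
                 (pa_domain (induced_dom TX TY D)))
       \<and> (pa_nice TY D \<theta> \<longleftrightarrow>
          pa_nice (compact_open TX TY) (induced_dom TX TY D) (induced_act TX \<theta>))"
proof -
  have i: "openin (prod_topology euclidean TY) (pa_domain D) \<longleftrightarrow>
          openin (prod_topology euclidean (compact_open TX TY)) (pa_domain (induced_dom TX TY D))"
    using dom_open_fwd[OF assms(1,2)] dom_open_bwd[OF assms(1,3)] by blast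
  have ii: "pa_continuous TY D \<theta> \<longleftrightarrow>
      pa_continuous (compact_open TX TY) (induced_dom TX TY D) (induced_act TX \<theta>)"
    using cont_fwd[OF assms(1)] cont_bwd[OF assms(1,3)] by blast
  show ?thesis using i ii unfolding pa_nice_def by blast
qed

end
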